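(* Let $\mathcal{B}$ be a finite relational structure with domain $B$ over signature $\sigma$, and let $f$ be a shop on $B$ that is an equivalence relation (i.e. there is an equivalence relation $\sim$ on $B$ with $f(x)$ equal to the $\sim$-class of $x$ for every $x$) and that is a she of $\mathcal{B}$. Then for every sentence $\varphi$ of $\{\exists,\forall,\wedge,\vee\}$-FO over $\sigma$, $\mathcal{B}\models\varphi$ if and only if $\mathcal{B}_{/f}\models\varphi$; that is, the problems $\{\exists,\forall,\wedge,\vee\}$-FO$(\mathcal{B})$ and $\{\exists,\forall,\wedge,\vee\}$-FO$(\mathcal{B}_{/f})$ coincide.
   Context: $\{\exists,\forall,\wedge,\vee\}$-FO is the positive equality-free fragment of first-order logic: formulas built from atomic formulas $R(w_1,\ldots,w_r)$ ($R\in\sigma$) using only $\wedge,\vee,\exists,\forall$. The problem $\{\exists,\forall,\wedge,\vee\}$-FO$(\mathcal{C})$ takes as input such a sentence and asks whether $\mathcal{C}$ satisfies it. A shop on $B$ is a map $f:B\to\mathcal{P}(B)\setminus\{\emptyset\}$ such that every $y\in B$ lies in some $f(x)$. A she of $\mathcal{B}$ is a shop $f$ such that for every $R\in\sigma$ of arity $i$, if $\mathcal{B}\models R(x_1,\ldots,x_i)$ then $\mathcal{B}\models R(y_1,\ldots,y_i)$ for all $y_j\in f(x_j)$. For $f$ an equivalence relation, $\mathcal{B}_{/f}$ is the $\sigma$-structure whose elements are the equivalence classes of $f$, in which $R(\tilde b_1,\ldots,\tilde b_r)$ holds iff $\mathcal{B}\models R(b_1,\ldots,b_r)$ for some representatives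 $b_j\in\tilde b_j$. *)

theory Defs
  imports Main
begin

record ('a, 'r) struc =
  sdom :: "'a set"
  srel :: "'r \<Rightarrow> 'a list \<Rightarrow> bool"

definition is_struc :: "('r \<Rightarrow> nat) \<Rightarrow> ('a, 'r) struc \<Rightarrow> bool" where
  "is_struc sig S \<longleftrightarrow>
     (\<forall>R xs. srel S R xs \<longrightarrow> length xs = sig R \<and> set xs \<subseteq> sdom S)"

datatype 'r pfo =
    Atom 'r "nat list"
  | Conj "'r pfo" "'r pfo"
  | Disj "'r pfo" "'r pfo"
  | Ex nat "'r pfo"
  | All nat "'r pfo"

fun wf_pfo :: "('r \<Rightarrow> nat) \<Rightarrow> 'r pfo \<Rightarrow> bool" where
  "wf_pfo sig (Atom R ws) = (length ws = sig R)"
| "wf_pfo sig (Conj p q) = (wf_pfo sig p \<and> wf_pfo sig q)"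
| "wf_pfo sig (Disj p q) = (wf_pfo sig p \<and> wf_pfo sig q)"
| "wf_pfo sig (Ex v p) = wf_pfo sig p"
| "wf_pfo sig (All v p) = wf_pfo sig p"

fun fv :: "'r pfo \<Rightarrow> nat set" where
  "fv (Atom R ws) = set ws"
| "fv (Conj p q) = fv p \<union> fv q"
| "fv (Disj p q) = fv p \<union> fv q"
| "fv (Ex v p) = fv p - {v}"
| "fv (All v p) = fv p - {v}"

definition is_sentence :: "('r \<Rightarrow> nat) \<Rightarrow> 'r pfo \<Rightarrow> bool" where
  "is_sentence sig \<phi> \<longleftrightarrow> wf_pfo sig \<phi> \<and> fv \<phi> = {}"

fun sat :: "('a, 'r) struc \<Rightarrow> (nat \<Rightarrow> 'a) \<Rightarrow> 'r pfo \<Rightarrow> bool" where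
  "sat S e (Atom R ws) = srel S R (map e ws)"
| "sat S e (Conj p q) = (sat S e p \<and> sat S e q)"
| "sat S e (Disj p q) = (sat S e p \<or> sat S e q)"
| "sat S e (Ex v p) = (\<exists>a\<in>sdom S. sat S (e(v := a)) p)"
| "sat S e (All v p) = (\<forall>a\<in>sdom S. sat S (e(v := a)) p)"

text \<open>Satisfaction of a sentence (the assignment is irrelevant for sentences).\<close>
definition models :: "('a, 'r) struc \<Rightarrow> 'r pfo \<Rightarrow> bool" where
  "models S \<phi> \<longleftrightarrow> sat S (\<lambda>_. undefined) \<phi>"

definition is_shop :: "'a set \<Rightarrow> ('a \<Rightarrow> 'a set) \<Rightarrow> bool" where
  "is_shop B f \<longleftrightarrow> (\<forall>x\<in>B. f x \<noteq> {} \<and> f x \<subseteq> B) \<and> (\<forall>y\<in>B. \<exists>x\<in>B. y \<in> f x)"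

definition is_she :: "('a, 'r) struc \<Rightarrow> ('a \<Rightarrow> 'a set) \<Rightarrow> bool" where
  "is_she S f \<longleftrightarrow> is_shop (sdom S) f \<and>
     (\<forall>R xs ys. srel S R xs \<longrightarrow> list_all2 (\<lambda>x y. y \<in> f x) xs ys \<longrightarrow> srel S R ys)"

definition shop_is_equiv :: "'a set \<Rightarrow> ('a \<Rightarrow> 'a set) \<Rightarrow> bool" where
  "shop_is_equiv B f \<longleftrightarrow> (\<exists>r. equiv B r \<and> (\<forall>x\<in>B. f x = r `` {x}))"

definition quot_struc :: "('a, 'r) struc \<Rightarrow> ('a \<Rightarrow> 'a set) \<Rightarrow> ('a set, 'r) struc" where
  "quot_struc S f =
     \<lparr> sdom = f ` sdom S,
       srel = (\<lambda>R cs. set cs \<subseteq> f ` sdom S \<and>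
                 (\<exists>bs. list_all2 (\<in>) bs cs \<and> srel S R bs)) \<rparr>"

end

theory Submission
  imports Defs
begin

lemma sat_agree:
  "\<forall>v\<in>fv \<phi>. e v = e' v \<Longrightarrow> sat S e \<phi> = sat S e' \<phi>"
proof (induction \<phi> arbitrary: e e')
  case (Atom R ws)
  then have "map e ws = map e' ws" by (simp add: map_eq_conv)
  then show ?case by (metis sat.simps(1))
next
  case (Ex v p)
  have "\<And>a. sat S (e(v:=a)) p = sat S (e'(v:=a)) p"
    by (rule Ex.IH) (use Ex.prems in auto)
  then show ?case by simp
next
  case (All v p)
  have "\<And>a. sat S (e(v:=a)) p = sat S (e'(v:=a)) p"
    by (rule All.IH) (use All.prems in auto)
  then show ?case by simp
next
  case (Conj p q)
  then show ?case by (metis UnCI fv.simps(2) sat.simps(2))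
next
  case (Disj p q)
  then show ?case by (metis UnCI fv.simps(3) sat.simps(3))
qed

lemma sat_quot:
  assumes str: "is_struc sig S"
    and eq: "equiv (sdom S) r" and fr: "\<forall>x\<in>sdom S. f x = r `` {x}"
    and she: "is_she S f"
  shows "\<forall>v\<in>fv \<phi>. e v \<in> sdom S \<Longrightarrow> sat S e \<phi> = sat (quot_struc S f) (f \<circ> e) \<phi>"
proof (induction \<phi> arbitrary: e)
  case (Atom R ws)
  have mem: "\<And>x. x \<in> sdom S \<Longrightarrow> x \<in> f x"
    using eq fr by (auto simp: equiv_def refl_on_def)
  have sym: "\<And>x y. x \<in> sdom S \<Longrightarrow> y \<in> sdom S \<Longrightarrow> y \<in> f x \<Longrightarrow> x \<in> f y"
    using eq fr by (auto simp: equiv_def sym_def)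
  have ws: "\<forall>w\<in>set ws. e w \<in> sdom S" using Atom by simp
  show ?case
  proof
    assume h: "sat S e (Atom R ws)"
    have "list_all2 (\<in>) (map e ws) (map (f \<circ> e) ws)"
      using ws mem by (simp add: list_all2_conv_all_nth)
    then show "sat (quot_struc S f) (f \<circ> e) (Atom R ws)"
      using h ws by (auto simp: quot_struc_def)
  next
    assume "sat (quot_struc S f) (f \<circ> e) (Atom R ws)"
    then obtain bs where bs: "list_all2 (\<in>) bs (map (f \<circ> e) ws)" and r: "srel S R bs"
      by (auto simp: quot_struc_def)
    have bd: "set bs \<subseteq> sdom S" using str r by (auto simp: is_struc_def)
    have "list_all2 (\<lambda>x y. y \<in> f x) bs (map e ws)"
    proof -
      have L: "length bs = length ws" using bs by (simp add: list_all2_lengthD)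
      have "\<And>i. i < length ws \<Longrightarrow> e (ws ! i) \<in> f (bs ! i)"
      proof -
        fix i assume i: "i < length ws"
        have b1: "bs ! i \<in> f (e (ws ! i))" using bs i L by (simp add: list_all2_conv_all_nth)
        have b2: "bs ! i \<in> sdom S" using bd i L by (simp add: subset_iff)
        have b3: "e (ws ! i) \<in> sdom S" using ws i by simp
        show "e (ws ! i) \<in> f (bs ! i)" by (rule sym[OF b3 b2 b1])
      qed
      then show ?thesis using L by (simp add: list_all2_conv_all_nth)
    qed
    then show "sat S e (Atom R ws)" using she r by (auto simp: is_she_def)
  qed
next
  case (Ex v p)
  have IH: "\<And>a. a \<in> sdom S \<Longrightarrow> sat S (e(v:=a)) p = sat (quot_struc S f) ((f \<circ> e)(v := f a)) p"
  proof -
    fix a assume "a \<in> sdom S"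
    then have "sat S (e(v:=a)) p = sat (quot_struc S f) (f \<circ> (e(v:=a))) p"
      using Ex by (intro Ex.IH) auto
    moreover have "f \<circ> (e(v:=a)) = (f \<circ> e)(v := f a)" by (simp add: fun_eq_iff)
    ultimately show "?thesis a" by simp
  qed
  let ?Q = "quot_struc S f"
  have "sat ?Q (f \<circ> e) (Ex v p) \<longleftrightarrow> (\<exists>c\<in>f ` sdom S. sat ?Q ((f \<circ> e)(v:=c)) p)"
    by (simp add: quot_struc_def)
  also have "\<dots> \<longleftrightarrow> (\<exists>a\<in>sdom S. sat ?Q ((f \<circ> e)(v:=f a)) p)" by blast
  also have "\<dots> \<longleftrightarrow> (\<exists>a\<in>sdom S. sat S (e(v:=a)) p)"
    by (intro bex_cong refl) (rule IH[symmetric])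
  finally have X: "sat ?Q (f \<circ> e) (Ex v p) \<longleftrightarrow> sat S e (Ex v p)" by (simp only: sat.simps)
  show ?case using X by blast
next
  case (All v p)
  have IH: "\<And>a. a \<in> sdom S \<Longrightarrow> sat S (e(v:=a)) p = sat (quot_struc S f) ((f \<circ> e)(v := f a)) p"
  proof -
    fix a assume "a \<in> sdom S"
    then have "sat S (e(v:=a)) p = sat (quot_struc S f) (f \<circ> (e(v:=a))) p"
      using All by (intro All.IH) auto
    moreover have "f \<circ> (e(v:=a)) = (f \<circ> e)(v := f a)" by (simp add: fun_eq_iff)
    ultimately show "?thesis a" by simp
  qed
  let ?Q = "quot_struc S f"
  have "sat ?Q (f \<circ> e) (All v p) \<longleftrightarrow> (\<forall>c\<in>f ` sdom S. sat ?Q ((f \<circ> e)(v:=c)) p)"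
    by (simp add: quot_struc_def)
  also have "\<dots> \<longleftrightarrow> (\<forall>a\<in>sdom S. sat ?Q ((f \<circ> e)(v:=f a)) p)" by blast
  also have "\<dots> \<longleftrightarrow> (\<forall>a\<in>sdom S. sat S (e(v:=a)) p)"
    by (intro ball_cong refl) (rule IH[symmetric])
  finally have X: "sat ?Q (f \<circ> e) (All v p) \<longleftrightarrow> sat S e (All v p)" by (simp only: sat.simps)
  show ?case using X by blast
qed auto

theorem lemma3p10:
  fixes sig :: "'r \<Rightarrow> nat" and S :: "('a, 'r) struc" and f :: "'a \<Rightarrow> 'a set"
  assumes "is_struc sig S"
    and "finite (sdom S)"
    and "is_shop (sdom S) f"
    and "shop_is_equiv (sdom S) f"
    and "is_she S f"
    and "is_sentence sig \<phi>"
  shows "models S \<phi> \<longleftrightarrow> models (quot_struc S f) \<phi>"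
proof -
  obtain r where eq: "equiv (sdom S) r" and fr: "\<forall>x\<in>sdom S. f x = r `` {x}"
    using assms(4) by (auto simp: shop_is_equiv_def)
  have fv: "fv \<phi> = {}" using assms(6) by (simp add: is_sentence_def)
  have "sat S (\<lambda>_. undefined) \<phi> = sat (quot_struc S f) (f \<circ> (\<lambda>_. undefined)) \<phi>"
    by (rule sat_quot[OF assms(1) eq fr assms(5)]) (simp add: fv)
  also have "\<dots> = sat (quot_struc S f) (\<lambda>_. undefined) \<phi>"
    by (rule sat_agree) (simp add: fv)
  finally show ?thesis by (simp add: models_def)
qed

end
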